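(* Let $e\in\mathbb{Z}^+$, $f\in\mathbb{Z}_{\ge0}$, let $F$ be a proper flat in $\mathbb{R}^{\binom{e+2}{2}-1}$, and let $A\subseteq\mathbb{R}^2$ with $|A|=\binom{f+2}{2}$ be such that $A$ is not contained in any element of $\mathcal{C}_{\le f}$. (i) If $e\geq f$, then $|\psi_e(A)\cap F|\le 1+\dim F$. (ii) If $e<f$, then $|\psi_e(A)\cap F|\le\binom{f+2}{2}-\binom{f-e+2}{2}-\binom{e+2}{2}+2+\dim F$. (iii) If $e<f$, then $\dim\psi_d\big(A\setminus\psi_e^{-1}(F)\big)\geq\binom{f-e+2}{2}-1$ for every integer $d\geq f-e$.
   Context: For $k\in\mathbb{Z}^+$, a curve of degree $k$ is the zero set in $\mathbb{R}^2$ of a polynomial in $\mathbb{R}[x,y]$ of degree exactly $k$; $\mathcal{C}_k$ is the family of such curves, $\mathcal{C}_{\le k}:=\bigcup_{j=1}^k\mathcal{C}_j$, and $\mathcal{C}_{\le 0}:=\emptyset$. For $k\in\mathbb{Z}^+$ let $I_k=\{(i,j)\in\mathbb{Z}_{\ge 0}^2: 1\le i+j\le k\}$ (so $|I_k|=\binom{k+2}{2}-1$) and let the $k$-Veronese map be $\psi_k:\mathbb{R}^2\to\mathbb{R}^{\binom{k+2}{2}-1}$, $\psi_k(a_1,a_2)=(a_1^ia_2^j)_{(i,j)\in I_k}$. A flat is an affine subspace (translate of a linear subspace), its dimension being that of the linear subspace. For $S\subseteq\mathbb{R}^N$, $\mathrm{Fl}(S)$ is the smallest flat containing $S$ (the affine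 hull), $\mathrm{Fl}(\emptyset)=\emptyset$, and $\dim S:=\dim\mathrm{Fl}(S)$, with $\dim\emptyset=-1$. *)

theory Defs
  imports Complex_Main "HOL-Library.Function_Algebras"
begin

text \<open>Points of R^{binom(k+2,2)-1} are represented as real-valued functions on
  index pairs (i,j), vanishing outside I_k.\<close>
type_synonym vec = "nat \<times> nat \<Rightarrow> real"

definition Ik :: "nat \<Rightarrow> (nat \<times> nat) set" where
  "Ik k = {(i, j). 1 \<le> i + j \<and> i + j \<le> k}"

definition RN :: "nat \<Rightarrow> vec set" where
  "RN k = {v. \<forall>p. p \<notin> Ik k \<longrightarrow> v p = 0}"

definition veronese :: "nat \<Rightarrow> real \<times> real \<Rightarrow> vec" where
  "veronese k a = (\<lambda>(i, j). if (i, j) \<in> Ik k then fst a ^ i * snd a ^ j else 0)"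

definition scaleF :: "real \<Rightarrow> vec \<Rightarrow> vec" where
  "scaleF c v = (\<lambda>p. c * v p)"

definition is_flat :: "vec set \<Rightarrow> bool" where
  "is_flat F \<longleftrightarrow> (\<exists>a V. module.subspace scaleF V \<and> F = (\<lambda>v. a + v) ` V)"

definition Fl :: "vec set \<Rightarrow> vec set" where
  "Fl S = (if S = {} then {} else \<Inter>{F. is_flat F \<and> S \<subseteq> F})"

definition fdim :: "vec set \<Rightarrow> int" where
  "fdim S = (if S = {} then -1
     else int (vector_space.dim scaleF {x - y | x y. x \<in> Fl S \<and> y \<in> Fl S}))"

definition is_curve :: "nat \<Rightarrow> (real \<times> real) set \<Rightarrow> bool" where
  "is_curve k C \<longleftrightarrow> (\<exists>c :: nat \<times> nat \<Rightarrow> real.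
     (\<forall>i j. c (i, j) \<noteq> 0 \<longrightarrow> i + j \<le> k) \<and> (\<exists>i j. i + j = k \<and> c (i, j) \<noteq> 0) \<and>
     C = {(x, y). (\<Sum>i\<le>k. \<Sum>j\<le>k. c (i, j) * x ^ i * y ^ j) = 0})"

text \<open>C_{\<le>k}; for k = 0 this is empty.\<close>
definition curves_le :: "nat \<Rightarrow> (real \<times> real) set set" where
  "curves_le k = {C. \<exists>j. 1 \<le> j \<and> j \<le> k \<and> is_curve j C}"

end

theory Submission
  imports Defs
begin

definition scaleG :: "real \<Rightarrow> ('a \<Rightarrow> real) \<Rightarrow> ('a \<Rightarrow> real)" where
  "scaleG c v = (\<lambda>p. c * v p)"

lemma scaleG_apply[simp]: "scaleG c v p = c * v p" by (simp add: scaleG_def)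

interpretation G: vector_space scaleG
  by unfold_locales (auto simp: scaleG_def fun_eq_iff algebra_simps)

lemma scaleF_eq: "scaleF = scaleG"
  by (auto simp: scaleF_def scaleG_def fun_eq_iff)

lemma sum_fun_apply: "(sum f S) x = (\<Sum>i\<in>S. f i x)"
  by (induction S rule: infinite_finite_induct) auto

lemma "(f - g) x = f x - (g x::real)" by simp
lemma "(- g) x = - (g x::real)" by simp

lemma dual:
  fixes D :: "'d set" and X :: "'x set" and M :: "'d \<Rightarrow> 'x \<Rightarrow> real"
  assumes fD: "finite D" and fX: "finite X" and lt: "card X < card D"
  shows "\<exists>c. (\<exists>q\<in>D. c q \<noteq> 0) \<and> (\<forall>x\<in>X. (\<Sum>q\<in>D. c q * M q x) = 0)"
proof (rule ccontr)
  assume "\<not> ?thesis"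
  hence H: "\<And>c. (\<forall>x\<in>X. (\<Sum>q\<in>D. c q * M q x) = 0) \<Longrightarrow> \<forall>q\<in>D. c q = 0" by blast
  define r where "r q = (\<lambda>x. if x \<in> X then M q x else 0)" for q
  define ee where "ee x = (\<lambda>y. if y = x then 1 else (0::real))" for x :: 'x
  have inj: "inj_on r D"
  proof (rule inj_onI, rule ccontr)
    fix q1 q2 assume q: "q1 \<in> D" "q2 \<in> D" "r q1 = r q2" "q1 \<noteq> q2"
    define c where "c q = (if q = q1 then 1 else if q = q2 then -1 else (0::real))" for q
    have "\<forall>x\<in>X. (\<Sum>q\<in>D. c q * M q x) = 0"
    proof
      fix x assume x: "x \<in> X"
      have "(\<Sum>q\<in>D. c q * M q x) = (\<Sum>q\<in>{q1,q2}. c q * M q x)"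
        using q fD by (intro sum.mono_neutral_right) (auto simp: c_def)
      also have "\<dots> = M q1 x - M q2 x" using q by (simp add: c_def)
      also have "\<dots> = 0" using fun_cong[OF q(3), of x] x by (simp add: r_def)
      finally show "(\<Sum>q\<in>D. c q * M q x) = 0" .
    qed
    from H[OF this] q show False by (auto simp: c_def)
  qed
  have ind: "G.independent (r ` D)"
  proof (rule G.independent_if_scalars_zero)
    show "finite (r ` D)" using fD by simp
    fix u v assume s: "(\<Sum>x\<in>r ` D. scaleG (u x) x) = 0" and v: "v \<in> r ` D"
    have "\<forall>x\<in>X. (\<Sum>q\<in>D. u (r q) * M q x) = 0"
    proof
      fix x assume x: "x \<in> X"
      have "(\<Sum>q\<in>D. u (r q) * M q x) = (\<Sum>q\<in>D. u (r q) * r q x)"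
        using x by (simp add: r_def)
      also have "\<dots> = (\<Sum>w\<in>r ` D. u w * w x)"
        using inj by (simp add: sum.reindex)
      also have "\<dots> = (\<Sum>w\<in>r ` D. scaleG (u w) w) x" by (simp add: sum_fun_apply)
      also have "\<dots> = 0" using s by simp
      finally show "(\<Sum>q\<in>D. u (r q) * M q x) = 0" .
    qed
    from H[OF this] v show "u v = 0" by auto
  qed
  have sp: "r ` D \<subseteq> G.span (ee ` X)"
  proof
    fix w assume "w \<in> r ` D"
    then obtain q where q: "w = r q" by auto
    have "r q = (\<Sum>x\<in>X. scaleG (M q x) (ee x))"
    proof
      fix y
      show "r q y = (\<Sum>x\<in>X. scaleG (M q x) (ee x)) y"
        using fX by (simp add: sum_fun_apply r_def ee_def if_distrib[of "(*) _"] sum.delta cong: if_cong)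
    qed
    also have "\<dots> \<in> G.span (ee ` X)"
      by (intro G.span_sum G.span_scale G.span_base) auto
    finally show "w \<in> G.span (ee ` X)" using q by simp
  qed
  have "card (r ` D) \<le> card (ee ` X)"
    using G.independent_span_bound[OF _ ind sp] fX by auto
  also have "\<dots> \<le> card X" by (rule card_image_le[OF fX])
  finally show False using lt card_image[OF inj] by simp
qed

definition Dk :: "nat \<Rightarrow> (nat \<times> nat) set" where
  "Dk k = {(i, j). i + j \<le> k}"

definition mon :: "real \<times> real \<Rightarrow> nat \<times> nat \<Rightarrow> real" where
  "mon pt q = fst pt ^ fst q * snd pt ^ snd q"

definition pev :: "nat \<Rightarrow> vec \<Rightarrow> real \<times> real \<Rightarrow> real" where
  "pev k c pt = (\<Sum>q\<in>Dk k. c q * mon pt q)"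

definition supp :: "nat \<Rightarrow> vec \<Rightarrow> bool" where
  "supp k c \<longleftrightarrow> (\<forall>q. c q \<noteq> 0 \<longrightarrow> q \<in> Dk k)"

lemma Dk_sub: "Dk k \<subseteq> {..k} \<times> {..k}" by (auto simp: Dk_def)

lemma finite_Dk[simp]: "finite (Dk k)"
  using Dk_sub finite_subset by blast

lemma Dk_mono: "k \<le> k' \<Longrightarrow> Dk k \<subseteq> Dk k'" by (auto simp: Dk_def)

lemma Dk_Suc: "Dk (Suc k) = Dk k \<union> (\<lambda>i. (i, Suc k - i)) ` {..Suc k}"
proof (intro set_eqI iffI)
  fix p assume "p \<in> Dk (Suc k)"
  then obtain i j where p: "p = (i,j)" "i + j \<le> Suc k" unfolding Dk_def by auto
  show "p \<in> Dk k \<union> (\<lambda>i. (i, Suc k - i)) ` {..Suc k}"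
  proof (cases "i + j \<le> k")
    case True then show ?thesis using p unfolding Dk_def by auto
  next
    case False
    hence "j = Suc k - i" "i \<le> Suc k" using p by auto
    then show ?thesis using p by auto
  qed
qed (auto simp: Dk_def)

lemma card_Dk: "card (Dk k) = (k + 2) choose 2"
proof (induction k)
  case 0
  have "Dk 0 = {(0,0)}" by (auto simp: Dk_def)
  then show ?case by (simp add: choose_two)
next
  case (Suc k)
  have dis: "Dk k \<inter> (\<lambda>i. (i, Suc k - i)) ` {..Suc k} = {}" by (auto simp: Dk_def)
  have inj: "inj_on (\<lambda>i. (i, Suc k - i)) {..Suc k}" by (auto intro: inj_onI)
  have "card (Dk (Suc k)) = card (Dk k) + (k + 2)"
    unfolding Dk_Suc by (subst card_Un_disjoint) (use dis inj in \<open>auto simp: card_image\<close>)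
  also have "\<dots> = (Suc k + 2) choose 2" using Suc
    by (simp add: choose_two)
  finally show ?case .
qed

lemma Ik_eq: "Ik k = Dk k - {(0,0)}" by (auto simp: Ik_def Dk_def)

lemma finite_Ik[simp]: "finite (Ik k)" by (simp add: Ik_eq)

lemma card_Ik: "card (Ik k) + 1 = (k + 2) choose 2"
proof -
  have "(0,0) \<in> Dk k" by (simp add: Dk_def)
  then show ?thesis unfolding Ik_eq card_Dk[symmetric]
    using card.remove[OF finite_Dk, of "(0,0)" k] by simp
qed

lemma pev_mono:
  assumes "supp k c" "k \<le> k'"
  shows "pev k' c pt = pev k c pt"
  unfolding pev_def using assms
  by (intro sum.mono_neutral_right) (auto simp: supp_def Dk_mono)

lemma is_curve_pev:
  assumes "supp j c" "q \<in> Dk j" "fst q + snd q = j" "c q \<noteq> 0"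
  shows "is_curve j {pt. pev j c pt = 0}"
  unfolding is_curve_def
proof (rule exI[of _ c], intro conjI)
  show "\<forall>i ja. c (i, ja) \<noteq> 0 \<longrightarrow> i + ja \<le> j" using assms(1) unfolding supp_def Dk_def by blast
  show "\<exists>i ja. i + ja = j \<and> c (i, ja) \<noteq> 0" using assms(3,4) by (metis prod.collapse)
  have "\<And>x y. (\<Sum>i\<le>j. \<Sum>ja\<le>j. c (i, ja) * x ^ i * y ^ ja) = pev j c (x, y)"
  proof -
    fix x y
    have "(\<Sum>i\<le>j. \<Sum>ja\<le>j. c (i, ja) * x ^ i * y ^ ja) = (\<Sum>q\<in>{..j}\<times>{..j}. c q * mon (x,y) q)"
      by (simp add: sum.cartesian_product mon_def mult.assoc case_prod_beta)
    also have "\<dots> = pev j c (x,y)" unfolding pev_def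
      using assms(1) Dk_sub by (intro sum.mono_neutral_right) (auto simp: supp_def)
    finally show "(\<Sum>i\<le>j. \<Sum>ja\<le>j. c (i, ja) * x ^ i * y ^ ja) = pev j c (x, y)" .
  qed
  then show "{pt. pev j c pt = 0} = {(x, y). (\<Sum>i\<le>j. \<Sum>ja\<le>j. c (i, ja) * x ^ i * y ^ ja) = 0}"
    by (simp add: set_eq_iff case_prod_beta)
qed

lemma curve_lemma:
  assumes "A \<noteq> {}" "supp f c" "\<exists>q. c q \<noteq> 0" "\<forall>a\<in>A. pev f c a = 0"
  shows "\<exists>C\<in>curves_le f. A \<subseteq> C"
proof -
  define J where "J = {q. c q \<noteq> 0}"
  have JD: "J \<subseteq> Dk f" using assms(2) unfolding J_def supp_def by blast
  hence fJ: "finite J" using finite_subset finite_Dk by blast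
  have Jne: "J \<noteq> {}" using assms(3) unfolding J_def by blast
  define j where "j = Max ((\<lambda>q. fst q + snd q) ` J)"
  have "j \<in> (\<lambda>q. fst q + snd q) ` J"
    unfolding j_def using fJ Jne by (intro Max_in) auto
  then obtain q where q: "q \<in> J" "fst q + snd q = j" by blast
  have jle: "\<And>q. q \<in> J \<Longrightarrow> fst q + snd q \<le> j" unfolding j_def using fJ by simp
  have sj: "supp j c" unfolding supp_def
  proof (intro allI impI)
    fix p assume "c p \<noteq> 0"
    hence "p \<in> J" unfolding J_def by blast
    from jle[OF this] show "p \<in> Dk j" unfolding Dk_def by (cases p) simp
  qed
  have "q \<in> Dk f" using q JD by blast
  hence jf: "j \<le> f" using q(2) unfolding Dk_def by (cases q) simp
  have pe: "\<And>pt. pev f c pt = pev j c pt" using pev_mono[OF sj jf] by blast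
  have cq: "c q \<noteq> 0" using q(1) unfolding J_def by blast
  show ?thesis
  proof (cases "j = 0")
    case True
    obtain a where a: "a \<in> A" using assms(1) by blast
    have D0: "Dk 0 = {(0,0)}" unfolding Dk_def by auto
    have "q = (0,0)" using q(2) True by (cases q) simp
    hence "c (0,0) \<noteq> 0" using cq by simp
    moreover have "pev j c a = c (0,0)" unfolding True pev_def D0 by (simp add: mon_def)
    ultimately show ?thesis using assms(4) a pe by simp
  next
    case False
    have "q \<in> Dk j" using q(2) unfolding Dk_def by (cases q) simp
    hence "is_curve j {pt. pev j c pt = 0}"
      using is_curve_pev[OF sj _ q(2) cq] by blast
    hence "{pt. pev j c pt = 0} \<in> curves_le f" using False jf unfolding curves_le_def
      by (intro CollectI exI[of _ j]) simp
    moreover have "A \<subseteq> {pt. pev j c pt = 0}" using assms(4) pe by auto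
    ultimately show ?thesis by blast
  qed
qed

definition padd :: "(nat \<times> nat) \<times> (nat \<times> nat) \<Rightarrow> nat \<times> nat" where
  "padd pq = (fst (fst pq) + fst (snd pq), snd (fst pq) + snd (snd pq))"

definition conv :: "nat \<Rightarrow> nat \<Rightarrow> vec \<Rightarrow> vec \<Rightarrow> vec" where
  "conv e1 e2 g h s = (\<Sum>pq\<in>{pq \<in> Dk e1 \<times> Dk e2. padd pq = s}. g (fst pq) * h (snd pq))"

lemma padd_Dk: "pq \<in> Dk e1 \<times> Dk e2 \<Longrightarrow> padd pq \<in> Dk (e1 + e2)"
  by (auto simp: Dk_def padd_def)

lemma conv_supp: "supp (e1 + e2) (conv e1 e2 g h)"
  unfolding supp_def
proof (intro allI impI)
  fix s assume "conv e1 e2 g h s \<noteq> 0"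
  hence "{pq \<in> Dk e1 \<times> Dk e2. padd pq = s} \<noteq> {}" unfolding conv_def by force
  then obtain pq where "pq \<in> Dk e1 \<times> Dk e2" "padd pq = s" by blast
  then show "s \<in> Dk (e1 + e2)" using padd_Dk by blast
qed

lemma mon_padd: "mon pt (padd pq) = mon pt (fst pq) * mon pt (snd pq)"
  by (simp add: mon_def padd_def power_add)

lemma conv_pev: "pev (e1 + e2) (conv e1 e2 g h) pt = pev e1 g pt * pev e2 h pt"
proof -
  have "pev e1 g pt * pev e2 h pt = (\<Sum>p\<in>Dk e1. \<Sum>q\<in>Dk e2. (g p * mon pt p) * (h q * mon pt q))"
    unfolding pev_def by (simp add: sum_product)
  also have "\<dots> = (\<Sum>p\<in>Dk e1. \<Sum>q\<in>Dk e2. g (fst (p,q)) * h (snd (p,q)) * mon pt (padd (p,q)))"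
    by (intro sum.cong refl) (simp add: mon_padd mult_ac)
  also have "\<dots> = (\<Sum>pq\<in>Dk e1 \<times> Dk e2. g (fst pq) * h (snd pq) * mon pt (padd pq))"
    by (simp only: sum.cartesian_product')
  also have "\<dots> = (\<Sum>s\<in>Dk (e1 + e2). \<Sum>pq\<in>{pq \<in> Dk e1 \<times> Dk e2. padd pq = s}. g (fst pq) * h (snd pq) * mon pt (padd pq))"
    by (rule sum.group[symmetric]) (use padd_Dk in auto)
  also have "\<dots> = (\<Sum>s\<in>Dk (e1 + e2). conv e1 e2 g h s * mon pt s)"
    unfolding conv_def sum_distrib_right by (intro sum.cong refl) auto
  finally show ?thesis unfolding pev_def by simp
qed

lemma lex_max:
  fixes J :: "(nat \<times> nat) set"
  assumes "finite J" "J \<noteq> {}"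
  shows "\<exists>m\<in>J. \<forall>p\<in>J. fst p < fst m \<or> (fst p = fst m \<and> snd p \<le> snd m)"
proof -
  define i where "i = Max (fst ` J)"
  have i: "i \<in> fst ` J" unfolding i_def using assms by (intro Max_in) auto
  define J' where "J' = {p\<in>J. fst p = i}"
  have J'ne: "J' \<noteq> {}" using i unfolding J'_def by force
  have fJ': "finite J'" using assms(1) unfolding J'_def by simp
  define j where "j = Max (snd ` J')"
  have "j \<in> snd ` J'" unfolding j_def using fJ' J'ne by (intro Max_in) auto
  then obtain m where m: "m \<in> J'" "snd m = j" by blast
  show ?thesis
  proof (intro bexI ballI)
    show "m \<in> J" using m unfolding J'_def by blast
    fix p assume p: "p \<in> J"
    have "fst p \<le> i" unfolding i_def using assms(1) p by simp
    moreover have "fst p = i \<Longrightarrow> snd p \<le> j" unfolding j_def using fJ' p unfolding J'_def by simp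
    moreover have "fst m = i" using m unfolding J'_def by blast
    ultimately show "fst p < fst m \<or> (fst p = fst m \<and> snd p \<le> snd m)" using m(2) by force
  qed
qed

lemma conv_nonzero:
  assumes g: "\<exists>p\<in>Dk e1. g p \<noteq> 0" and h: "\<exists>q\<in>Dk e2. h q \<noteq> 0"
  shows "\<exists>s. conv e1 e2 g h s \<noteq> 0"
proof -
  define Jg where "Jg = {p\<in>Dk e1. g p \<noteq> 0}"
  define Jh where "Jh = {q\<in>Dk e2. h q \<noteq> 0}"
  obtain mg where mg: "mg \<in> Jg" "\<forall>p\<in>Jg. fst p < fst mg \<or> (fst p = fst mg \<and> snd p \<le> snd mg)"
  proof -
    have "finite Jg" unfolding Jg_def by simp
    moreover have "Jg \<noteq> {}" using g unfolding Jg_def by blast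
    ultimately show ?thesis using lex_max[of Jg] that by blast
  qed
  obtain mh where mh: "mh \<in> Jh" "\<forall>p\<in>Jh. fst p < fst mh \<or> (fst p = fst mh \<and> snd p \<le> snd mh)"
  proof -
    have "finite Jh" unfolding Jh_def by simp
    moreover have "Jh \<noteq> {}" using h unfolding Jh_def by blast
    ultimately show ?thesis using lex_max[of Jh] that by blast
  qed
  define s where "s = padd (mg, mh)"
  define P where "P = {pq \<in> Dk e1 \<times> Dk e2. padd pq = s}"
  have mP: "(mg, mh) \<in> P" using mg mh unfolding P_def s_def Jg_def Jh_def by auto
  have others: "g (fst pq) * h (snd pq) = 0" if pq: "pq \<in> P - {(mg, mh)}" for pq
  proof (rule ccontr)
    assume nz: "g (fst pq) * h (snd pq) \<noteq> 0"
    hence "fst pq \<in> Jg" "snd pq \<in> Jh" using pq unfolding P_def Jg_def Jh_def by auto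
    hence a: "fst (fst pq) < fst mg \<or> (fst (fst pq) = fst mg \<and> snd (fst pq) \<le> snd mg)"
      and b: "fst (snd pq) < fst mh \<or> (fst (snd pq) = fst mh \<and> snd (snd pq) \<le> snd mh)"
      using mg mh by auto
    have e: "fst (fst pq) + fst (snd pq) = fst mg + fst mh" "snd (fst pq) + snd (snd pq) = snd mg + snd mh"
      using pq unfolding P_def s_def padd_def by auto
    from a b e have "fst pq = mg" "snd pq = mh" by (auto simp: prod_eq_iff)
    hence "pq = (mg, mh)" by (simp add: prod_eq_iff)
    thus False using pq by simp
  qed
  have "conv e1 e2 g h s = (\<Sum>pq\<in>P. g (fst pq) * h (snd pq))" unfolding conv_def P_def ..
  also have "\<dots> = g mg * h mh + (\<Sum>pq\<in>P - {(mg,mh)}. g (fst pq) * h (snd pq))"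
  proof -
    have fP: "finite P" unfolding P_def by simp
    show ?thesis using sum.remove[OF fP mP, of "\<lambda>pq. g (fst pq) * h (snd pq)"] by simp
  qed
  also have "(\<Sum>pq\<in>P - {(mg,mh)}. g (fst pq) * h (snd pq)) = 0"
    by (rule sum.neutral) (use others in blast)
  also have "g mg * h mh + 0 \<noteq> 0" using mg mh unfolding Jg_def Jh_def by simp
  finally show ?thesis by blast
qed

lemma supp_mono: "supp k c \<Longrightarrow> k \<le> k' \<Longrightarrow> supp k' c"
  unfolding supp_def using Dk_mono by blast

lemma prod_lemma:
  assumes "A \<noteq> {}" "\<exists>p\<in>Dk e1. g p \<noteq> 0" "\<exists>q\<in>Dk e2. h q \<noteq> 0" "e1 + e2 \<le> f"
    and van: "\<forall>a\<in>A. pev e1 g a = 0 \<or> pev e2 h a = 0"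
  shows "\<exists>C\<in>curves_le f. A \<subseteq> C"
proof (rule curve_lemma[OF assms(1)])
  show "supp f (conv e1 e2 g h)" using supp_mono[OF conv_supp assms(4)] .
  show "\<exists>q. conv e1 e2 g h q \<noteq> 0" using conv_nonzero assms(2,3) .
  show "\<forall>a\<in>A. pev f (conv e1 e2 g h) a = 0"
    using van pev_mono[OF conv_supp assms(4)] conv_pev by simp
qed

definition delta :: "nat \<times> nat \<Rightarrow> vec" where
  "delta p = (\<lambda>q. if q = p then 1 else 0)"

lemma RN_span: "RN k \<subseteq> G.span (delta ` Ik k)"
proof
  fix v assume v: "v \<in> RN k"
  have "v = (\<Sum>p\<in>Ik k. scaleG (v p) (delta p))"
  proof
    fix q
    show "v q = (\<Sum>p\<in>Ik k. scaleG (v p) (delta p)) q"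
    proof (cases "q \<in> Ik k")
      case True
      then show ?thesis by (simp add: sum_fun_apply delta_def if_distrib[of "(*) _"] cong: if_cong)
    next
      case False
      then have "v q = 0" using v unfolding RN_def by blast
      moreover have "(\<Sum>p\<in>Ik k. scaleG (v p) (delta p)) q = 0"
        using False by (simp add: sum_fun_apply delta_def) (rule sum.neutral, auto)
      ultimately show ?thesis by simp
    qed
  qed
  also have "\<dots> \<in> G.span (delta ` Ik k)"
    by (intro G.span_sum G.span_scale G.span_base) auto
  finally show "v \<in> G.span (delta ` Ik k)" .
qed

lemma RN_subspace: "G.subspace (RN k)"
  unfolding G.subspace_def RN_def by auto

lemma RN_flat: "is_flat (RN k)"
  unfolding is_flat_def scaleF_eq
  by (rule exI[of _ 0], rule exI[of _ "RN k"]) (simp add: RN_subspace)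

lemma flat_nonempty: "is_flat F \<Longrightarrow> F \<noteq> {}"
  unfolding is_flat_def scaleF_eq using G.subspace_0 by blast

lemma flat_Fl: "is_flat F \<Longrightarrow> Fl F = F"
  unfolding Fl_def using flat_nonempty[of F] by auto

lemma diffs_flat:
  assumes "G.subspace V"
  shows "{x - y |x y. x \<in> (\<lambda>v. a + v) ` V \<and> y \<in> (\<lambda>v. a + v) ` V} = V"
proof (intro set_eqI iffI)
  fix z assume "z \<in> {x - y |x y. x \<in> (\<lambda>v. a + v) ` V \<and> y \<in> (\<lambda>v. a + v) ` V}"
  then obtain u v where "u \<in> V" "v \<in> V" "z = (a + u) - (a + v)" by blast
  then show "z \<in> V" using G.subspace_diff[OF assms] by simp
next
  fix z assume "z \<in> V"
  then have "z = (a + z) - (a + 0)" "a + z \<in> (\<lambda>v. a + v) ` V" "a + 0 \<in> (\<lambda>v. a + v) ` V"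
    using G.subspace_0[OF assms] by auto
  then show "z \<in> {x - y |x y. x \<in> (\<lambda>v. a + v) ` V \<and> y \<in> (\<lambda>v. a + v) ` V}" by blast
qed

lemma Fl_props:
  assumes "S \<noteq> {}" "S \<subseteq> RN d"
  shows "S \<subseteq> Fl S" "Fl S \<subseteq> RN d"
  using assms RN_flat[of d] unfolding Fl_def by auto

lemma card_le_dim:
  assumes "G.independent U" "U \<subseteq> W" "W \<subseteq> G.span Z" "finite Z"
  shows "finite U \<and> card U \<le> G.dim W"
proof -
  obtain B where B: "B \<subseteq> W" "G.independent B" "W \<subseteq> G.span B" "card B = G.dim W"
    using G.basis_exists by blast
  have fB: "finite B" using G.independent_span_bound[OF assms(4) B(2)] B(1) assms(3) by blast
  have "U \<subseteq> G.span B" using assms(2) B(3) by blast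
  from G.independent_span_bound[OF fB assms(1) this] B(4) show ?thesis by simp
qed

lemma diffs_RN:
  assumes "X \<subseteq> RN d"
  shows "{x - y |x y. x \<in> X \<and> y \<in> X} \<subseteq> G.span (delta ` Ik d)"
proof
  fix z assume "z \<in> {x - y |x y. x \<in> X \<and> y \<in> X}"
  then obtain x y where "x \<in> X" "y \<in> X" "z = x - y" by blast
  then have "z \<in> RN d" using assms G.subspace_diff[OF RN_subspace] by blast
  then show "z \<in> G.span (delta ` Ik d)" using RN_span by blast
qed

lemma aff_ind_card:
  fixes w :: "'t \<Rightarrow> vec"
  assumes fT: "finite T"
    and aff: "\<And>l. (\<Sum>t\<in>T. l t) = 0 \<Longrightarrow> (\<Sum>t\<in>T. scaleG (l t) (w t)) = 0 \<Longrightarrow> \<forall>t\<in>T. l t = 0"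
    and wX: "w ` T \<subseteq> X"
    and sp: "{x - y |x y. x \<in> X \<and> y \<in> X} \<subseteq> G.span Z" and fZ: "finite Z"
  shows "card T \<le> G.dim {x - y |x y. x \<in> X \<and> y \<in> X} + 1"
proof (cases "T = {}")
  case True then show ?thesis by simp
next
  case False
  then obtain t0 where t0: "t0 \<in> T" by blast
  define T' where "T' = T - {t0}"
  define u where "u t = w t - w t0" for t
  have injw: "inj_on w T"
  proof (rule inj_onI, rule ccontr)
    fix t1 t2 assume t: "t1 \<in> T" "t2 \<in> T" "w t1 = w t2" "t1 \<noteq> t2"
    define l where "l t = (if t = t1 then 1 else if t = t2 then -1 else (0::real))" for t
    have s1: "(\<Sum>t\<in>T. l t) = 0"
    proof -
      have "(\<Sum>t\<in>T. l t) = (\<Sum>t\<in>{t1,t2}. l t)"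
        using t fT by (intro sum.mono_neutral_right) (auto simp: l_def)
      also have "\<dots> = 0" using t by (simp add: l_def)
      finally show ?thesis .
    qed
    have s2: "(\<Sum>t\<in>T. scaleG (l t) (w t)) = 0"
    proof -
      have "(\<Sum>t\<in>T. scaleG (l t) (w t)) = (\<Sum>t\<in>{t1,t2}. scaleG (l t) (w t))"
        using t fT by (intro sum.mono_neutral_right) (auto simp: l_def scaleG_def fun_eq_iff)
      also have "\<dots> = 0" using t by (simp add: l_def scaleG_def fun_eq_iff)
      finally show ?thesis .
    qed
    from aff[OF s1 s2] t show False by (auto simp: l_def)
  qed
  have inju: "inj_on u T'"
    using injw unfolding u_def T'_def inj_on_def by auto
  have ind: "G.independent (u ` T')"
  proof (rule G.independent_if_scalars_zero)
    show "finite (u ` T')" using fT unfolding T'_def by simp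
    fix f v assume s: "(\<Sum>x\<in>u ` T'. scaleG (f x) x) = 0" and v: "v \<in> u ` T'"
    define l where "l t = (if t = t0 then - (\<Sum>t'\<in>T'. f (u t')) else f (u t))" for t
    have T: "T = insert t0 T'" "t0 \<notin> T'" using t0 unfolding T'_def by auto
    have fT': "finite T'" using fT unfolding T'_def by simp
    have lT': "(\<Sum>t\<in>T'. l t) = (\<Sum>t\<in>T'. f (u t))"
      by (rule sum.cong) (use T(2) in \<open>auto simp: l_def\<close>)
    have s1: "(\<Sum>t\<in>T. l t) = 0"
      unfolding T(1) using T(2) fT' lT' by (simp add: l_def)
    have "(\<Sum>t\<in>T. scaleG (l t) (w t)) = scaleG (l t0) (w t0) + (\<Sum>t\<in>T'. scaleG (l t) (w t))"
      unfolding T(1) using T(2) fT' by simp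
    also have "\<dots> = (\<Sum>t\<in>T'. scaleG (f (u t)) (u t))"
    proof
      fix q
      have "(\<Sum>t\<in>T'. scaleG (l t) (w t)) q = (\<Sum>t\<in>T'. f (u t) * w t q)"
        unfolding sum_fun_apply scaleG_apply by (rule sum.cong) (use T(2) in \<open>auto simp: l_def\<close>)
      moreover have "(\<Sum>t\<in>T'. scaleG (f (u t)) (u t)) q = (\<Sum>t\<in>T'. f (u t) * w t q) - (\<Sum>t\<in>T'. f (u t)) * w t0 q"
        by (simp add: sum_fun_apply u_def algebra_simps sum_subtractf sum_distrib_right sum_distrib_left)
      ultimately show "(scaleG (l t0) (w t0) + (\<Sum>t\<in>T'. scaleG (l t) (w t))) q = (\<Sum>t\<in>T'. scaleG (f (u t)) (u t)) q"
        by (simp add: l_def)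
    qed
    also have "\<dots> = (\<Sum>x\<in>u ` T'. scaleG (f x) x)"
      using inju by (simp add: sum.reindex)
    also have "\<dots> = 0" using s .
    finally have s2: "(\<Sum>t\<in>T. scaleG (l t) (w t)) = 0" .
    from v obtain t where t: "t \<in> T'" "v = u t" by blast
    with T have "t \<noteq> t0" "t \<in> T" by auto
    with aff[OF s1 s2] have "l t = 0" by blast
    then show "f v = 0" using t \<open>t \<noteq> t0\<close> unfolding l_def by simp
  qed
  have sub: "u ` T' \<subseteq> {x - y |x y. x \<in> X \<and> y \<in> X}"
    using wX t0 unfolding u_def T'_def by blast
  from card_le_dim[OF ind sub sp fZ] have "card (u ` T') \<le> G.dim {x - y |x y. x \<in> X \<and> y \<in> X}" by blast
  moreover have "card (u ` T') = card T - 1"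
    using card_image[OF inju] t0 fT unfolding T'_def by simp
  ultimately show ?thesis by simp
qed

lemma veronese_in: "p \<in> Ik k \<Longrightarrow> veronese k a p = mon a p"
  by (cases p) (simp add: veronese_def mon_def)

lemma veronese_out: "p \<notin> Ik k \<Longrightarrow> veronese k a p = 0"
  by (cases p) (simp add: veronese_def)

lemma veronese_RN: "veronese k a \<in> RN k"
  unfolding RN_def using veronese_out by blast

lemma inj_veronese:
  assumes "k \<ge> 1" shows "inj (veronese k)"
proof (rule injI)
  fix a b assume eq: "veronese k a = veronese k b"
  have "(1,0) \<in> Ik k" "(0,1) \<in> Ik k" using assms by (auto simp: Ik_def)
  hence "veronese k a (1,0) = fst a" "veronese k b (1,0) = fst b"
        "veronese k a (0,1) = snd a" "veronese k b (0,1) = snd b"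
    by (simp_all add: veronese_in mon_def)
  with eq show "a = b" by (simp add: prod_eq_iff)
qed

lemma Dk_insert: "Dk k = insert (0,0) (Ik k)" "(0,0) \<notin> Ik k"
  by (auto simp: Dk_def Ik_def)

lemma pev_split: "pev k g pt = g (0,0) + (\<Sum>p\<in>Ik k. g p * veronese k pt p)"
proof -
  have "pev k g pt = g (0,0) * mon pt (0,0) + (\<Sum>p\<in>Ik k. g p * mon pt p)"
    unfolding pev_def Dk_insert(1) using Dk_insert(2) by simp
  also have "(\<Sum>p\<in>Ik k. g p * mon pt p) = (\<Sum>p\<in>Ik k. g p * veronese k pt p)"
    by (rule sum.cong) (simp_all add: veronese_in)
  finally show ?thesis by (simp add: mon_def)
qed

lemma linfun_span:
  assumes "\<forall>b\<in>B. (\<Sum>p\<in>I. c p * b p) = 0" "v \<in> G.span B"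
  shows "(\<Sum>p\<in>I. c p * v p) = (0::real)"
  using assms(2)
proof (induction rule: G.span_induct_alt)
  case base then show ?case by simp
next
  case (step a x y)
  have "(\<Sum>p\<in>I. c p * (scaleG a x + y) p) = a * (\<Sum>p\<in>I. c p * x p) + (\<Sum>p\<in>I. c p * y p)"
    by (simp add: algebra_simps sum.distrib sum_distrib_left)
  then show ?case using step assms(1) by simp
qed

lemma annih:
  assumes fB: "finite B2" and lt: "card B2 < card (Ik e)"
  shows "\<exists>g. supp e g \<and> (\<exists>q\<in>Dk e. g q \<noteq> 0) \<and>
     (\<forall>pt. veronese e pt \<in> (\<lambda>v. a0 + v) ` G.span B2 \<longrightarrow> pev e g pt = 0)"
proof -
  obtain c where c: "\<exists>q\<in>Ik e. c q \<noteq> 0" "\<forall>b\<in>B2. (\<Sum>p\<in>Ik e. c p * b p) = 0"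
    using dual[OF finite_Ik fB lt, of "\<lambda>p b. b p"] by blast
  define L where "L v = (\<Sum>p\<in>Ik e. c p * v p)" for v :: vec
  define g where "g q = (if q = (0,0) then - L a0 else if q \<in> Ik e then c q else 0)" for q
  have "supp e g" unfolding supp_def
  proof (intro allI impI)
    fix q assume "g q \<noteq> 0"
    hence "q = (0,0) \<or> q \<in> Ik e" unfolding g_def by (auto split: if_splits)
    then show "q \<in> Dk e" using Dk_insert(1) by blast
  qed
  moreover have "\<exists>q\<in>Dk e. g q \<noteq> 0"
  proof -
    obtain q where q: "q \<in> Ik e" "c q \<noteq> 0" using c(1) by blast
    hence "q \<noteq> (0,0)" using Dk_insert(2) by blast
    hence "g q \<noteq> 0" using q unfolding g_def by simp
    moreover have "q \<in> Dk e" using q Dk_insert(1) by blast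
    ultimately show ?thesis by blast
  qed
  moreover have "pev e g pt = 0" if pt: "veronese e pt \<in> (\<lambda>v. a0 + v) ` G.span B2" for pt
  proof -
    obtain v where v: "v \<in> G.span B2" "veronese e pt = a0 + v" using pt by blast
    have Lv: "L v = 0" unfolding L_def using linfun_span[OF c(2) v(1)] .
    have "(\<Sum>p\<in>Ik e. g p * veronese e pt p) = L (veronese e pt)"
      unfolding L_def
    proof (rule sum.cong[OF refl])
      fix p assume "p \<in> Ik e"
      moreover hence "p \<noteq> (0,0)" using Dk_insert(2) by blast
      ultimately show "g p * veronese e pt p = c p * veronese e pt p" unfolding g_def by simp
    qed
    hence "pev e g pt = - L a0 + L (veronese e pt)"
      unfolding pev_split by (simp add: g_def)
    also have "L (veronese e pt) = L a0 + L v"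
      unfolding v(2) L_def by (simp add: algebra_simps sum.distrib)
    finally show ?thesis using Lv by simp
  qed
  ultimately show ?thesis by blast
qed

lemma base_case:
  assumes ef: "e \<le> f" and fA: "finite A" and Ane: "A \<noteq> {}"
    and nc: "\<not> (\<exists>C\<in>curves_le f. A \<subseteq> C)"
    and fB: "finite B2" and lt: "card B2 < card (Ik e)"
  shows "card (Dk (f - e)) \<le> card (A - {pt. veronese e pt \<in> (\<lambda>v. a0 + v) ` G.span B2})"
proof (rule ccontr)
  define A' where "A' = A - {pt. veronese e pt \<in> (\<lambda>v. a0 + v) ` G.span B2}"
  assume "\<not> card (Dk (f - e)) \<le> card (A - {pt. veronese e pt \<in> (\<lambda>v. a0 + v) ` G.span B2})"
  hence lt2: "card A' < card (Dk (f - e))" unfolding A'_def by simp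
  obtain g where g: "supp e g" "\<exists>q\<in>Dk e. g q \<noteq> 0"
     "\<forall>pt. veronese e pt \<in> (\<lambda>v. a0 + v) ` G.span B2 \<longrightarrow> pev e g pt = 0"
    using annih[OF fB lt, of a0] by blast
  have fA': "finite A'" using fA unfolding A'_def by simp
  obtain c where c: "\<exists>q\<in>Dk (f - e). c q \<noteq> 0" "\<forall>x\<in>A'. (\<Sum>q\<in>Dk (f - e). c q * mon x q) = 0"
    using dual[OF finite_Dk fA' lt2, of "\<lambda>q x. mon x q"] by blast
  have "\<exists>C\<in>curves_le f. A \<subseteq> C"
  proof (rule prod_lemma[OF Ane g(2) c(1)])
    show "e + (f - e) \<le> f" using ef by simp
    show "\<forall>a\<in>A. pev e g a = 0 \<or> pev (f - e) c a = 0"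
      using g(3) c(2) unfolding A'_def pev_def by blast
  qed
  with nc show False by blast
qed

lemma aff_A:
  assumes fe: "f \<le> e" and fA: "finite A" and cA: "card A = card (Dk f)"
    and nc: "\<not> (\<exists>C\<in>curves_le f. A \<subseteq> C)" and SA: "S \<subseteq> A"
    and s1: "(\<Sum>t\<in>S. l t) = 0" and s2: "(\<Sum>t\<in>S. scaleG (l t) (veronese e t)) = 0"
  shows "\<forall>t\<in>S. l t = 0"
proof (rule ccontr)
  assume "\<not> (\<forall>t\<in>S. l t = 0)"
  then obtain a0 where a0: "a0 \<in> S" "l a0 \<noteq> 0" by blast
  have a0A: "a0 \<in> A" using a0 SA by blast
  have fS: "finite S" using SA fA finite_subset by blast
  have fX: "finite (A - {a0})" using fA by simp
  have ltX: "card (A - {a0}) < card (Dk f)" using cA a0A fA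
  proof -
    have "card A > 0" using fA a0A card_gt_0_iff by blast
    then show ?thesis using cA a0A fA by (simp add: card_Diff_singleton)
  qed
  obtain c where c: "\<exists>q\<in>Dk f. c q \<noteq> 0" "\<forall>x\<in>A - {a0}. (\<Sum>q\<in>Dk f. c q * mon x q) = 0"
    using dual[OF finite_Dk fX ltX, of "\<lambda>q x. mon x q"] by blast
  have key: "(\<Sum>a\<in>S. l a * mon a q) = 0" if q: "q \<in> Dk f" for q
  proof (cases "q = (0,0)")
    case True then show ?thesis using s1 by (simp add: mon_def)
  next
    case False
    hence qI: "q \<in> Ik e" using q fe by (auto simp: Dk_def Ik_def)
    have "0 = (\<Sum>t\<in>S. scaleG (l t) (veronese e t)) q" using s2 by simp
    also have "\<dots> = (\<Sum>a\<in>S. l a * mon a q)"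
      by (simp add: sum_fun_apply veronese_in[OF qI])
    finally show ?thesis by simp
  qed
  have S': "S = insert a0 (S - {a0})" "a0 \<notin> S - {a0}" "finite (S - {a0})" using a0 fS by auto
  have "l a0 * (\<Sum>q\<in>Dk f. c q * mon a0 q) = (\<Sum>q\<in>Dk f. c q * (l a0 * mon a0 q))"
    by (simp add: sum_distrib_left algebra_simps)
  also have "\<dots> = (\<Sum>q\<in>Dk f. c q * (- (\<Sum>a\<in>S - {a0}. l a * mon a q)))"
  proof (rule sum.cong[OF refl])
    fix q assume "q \<in> Dk f"
    from key[OF this] have "l a0 * mon a0 q + (\<Sum>a\<in>S - {a0}. l a * mon a q) = 0"
      using S' sum.insert[OF S'(3) S'(2), of "\<lambda>a. l a * mon a q"] by simp
    then have "l a0 * mon a0 q = - (\<Sum>a\<in>S - {a0}. l a * mon a q)" by linarith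
    then show "c q * (l a0 * mon a0 q) = c q * (- (\<Sum>a\<in>S - {a0}. l a * mon a q))" by simp
  qed
  also have "\<dots> = - (\<Sum>a\<in>S - {a0}. l a * (\<Sum>q\<in>Dk f. c q * mon a q))"
  proof -
    have "(\<Sum>q\<in>Dk f. c q * (- (\<Sum>a\<in>S - {a0}. l a * mon a q)))
        = - (\<Sum>q\<in>Dk f. \<Sum>a\<in>S - {a0}. c q * (l a * mon a q))"
      by (simp add: sum_distrib_left sum_negf)
    also have "\<dots> = - (\<Sum>a\<in>S - {a0}. \<Sum>q\<in>Dk f. c q * (l a * mon a q))"
      by (subst sum.swap) (rule refl)
    also have "\<dots> = - (\<Sum>a\<in>S - {a0}. l a * (\<Sum>q\<in>Dk f. c q * mon a q))"
      by (simp add: sum_distrib_left mult_ac)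
    finally show ?thesis .
  qed
  also have "\<dots> = 0"
  proof -
    have "(\<Sum>a\<in>S - {a0}. l a * (\<Sum>q\<in>Dk f. c q * mon a q)) = 0"
      using c(2) SA by (intro sum.neutral) auto
    then show ?thesis by simp
  qed
  finally have "(\<Sum>q\<in>Dk f. c q * mon a0 q) = 0" using a0(2) by simp
  have van: "\<forall>a\<in>A. pev f (\<lambda>q. if q \<in> Dk f then c q else 0) a = 0"
  proof
    fix a assume a: "a \<in> A"
    have "pev f (\<lambda>q. if q \<in> Dk f then c q else 0) a = (\<Sum>q\<in>Dk f. c q * mon a q)"
      unfolding pev_def by (rule sum.cong) simp_all
    also have "\<dots> = 0"
    proof (cases "a = a0")
      case True then show ?thesis using \<open>(\<Sum>q\<in>Dk f. c q * mon a0 q) = 0\<close> by simp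
    next
      case False then show ?thesis using c(2) a by blast
    qed
    finally show "pev f (\<lambda>q. if q \<in> Dk f then c q else 0) a = 0" .
  qed
  have "\<exists>C\<in>curves_le f. A \<subseteq> C"
  proof (rule curve_lemma[OF _ _ _ van])
    show "A \<noteq> {}" using a0A by blast
    show "supp f (\<lambda>q. if q \<in> Dk f then c q else 0)" unfolding supp_def by simp
    show "\<exists>q. (if q \<in> Dk f then c q else 0) \<noteq> 0" using c(1) by auto
  qed
  with nc show False by blast
qed

lemma flat_setup:
  assumes e1: "e \<ge> 1" and fl: "is_flat F" and FR: "F \<subseteq> RN e" and Fne: "F \<noteq> RN e"
  obtains a B where "F = (\<lambda>v. a + v) ` G.span B" "finite B" "card B < card (Ik e)"
    "fdim F = int (card B)" "{x - y |x y. x \<in> F \<and> y \<in> F} \<subseteq> G.span (delta ` Ik e)"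
proof -
  obtain a V where V: "G.subspace V" "F = (\<lambda>v. a + v) ` V"
    using fl unfolding is_flat_def scaleF_eq by blast
  have aR: "a \<in> RN e" using V FR G.subspace_0[OF V(1)] by force
  have VR: "V \<subseteq> RN e"
  proof
    fix v assume "v \<in> V"
    hence "a + v \<in> RN e" using V FR by blast
    hence "(a + v) - a \<in> RN e" using aR G.subspace_diff[OF RN_subspace] by blast
    thus "v \<in> RN e" by simp
  qed
  obtain B where B: "B \<subseteq> V" "G.independent B" "V \<subseteq> G.span B" "card B = G.dim V"
    using G.basis_exists by blast
  have fB: "finite B" using G.independent_span_bound[OF _ B(2), of "delta ` Ik e"] B(1) VR RN_span
    by auto
  have spB: "G.span B = V" using G.span_minimal[OF B(1) V(1)] B(3) by blast
  have dif: "{x - y |x y. x \<in> F \<and> y \<in> F} = V" unfolding V(2) using diffs_flat[OF V(1)] .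
  have fd: "fdim F = int (card B)"
    using flat_nonempty[OF fl] flat_Fl[OF fl] dif B(4) unfolding fdim_def scaleF_eq by simp
  have VneR: "V \<noteq> RN e"
  proof
    assume "V = RN e"
    have "RN e \<subseteq> F"
    proof
      fix x assume "x \<in> RN e"
      hence "x - a \<in> V" using aR G.subspace_diff[OF RN_subspace] \<open>V = RN e\<close> by blast
      thus "x \<in> F" unfolding V(2) by (rule rev_image_eqI) simp
    qed
    with FR Fne show False by blast
  qed
  then obtain w where w: "w \<in> RN e" "w \<notin> V" using VR by blast
  have ind: "G.independent (insert w B)"
    using G.independent_insertI[OF _ B(2)] w(2) spB by blast
  have "finite (insert w B) \<and> card (insert w B) \<le> card (delta ` Ik e)"
    using G.independent_span_bound[OF _ ind, of "delta ` Ik e"] w(1) B(1) VR RN_span by auto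
  moreover have "card (delta ` Ik e) \<le> card (Ik e)" by (rule card_image_le) simp
  moreover have "w \<notin> B" using w(2) B(1) by blast
  hence "card (insert w B) = card B + 1" using fB by simp
  ultimately have "card B < card (Ik e)" by simp
  moreover have "{x - y |x y. x \<in> F \<and> y \<in> F} \<subseteq> G.span (delta ` Ik e)"
    using dif VR RN_span by blast
  ultimately show ?thesis using that[of a B] V(2) spB fB fd by blast
qed

lemma card_ver_inter:
  assumes "e \<ge> 1"
  shows "card (veronese e ` A \<inter> F) = card {pt\<in>A. veronese e pt \<in> F}"
proof -
  have "veronese e ` A \<inter> F = veronese e ` {pt\<in>A. veronese e pt \<in> F}" by blast
  moreover have "inj_on (veronese e) {pt\<in>A. veronese e pt \<in> F}"
    using inj_veronese[OF assms] by (simp add: inj_on_def inj_def)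
  ultimately show ?thesis by (simp add: card_image)
qed

lemma part1:
  assumes e1: "e \<ge> 1" and fl: "is_flat F" and FR: "F \<subseteq> RN e" and Fne: "F \<noteq> RN e"
    and fA: "finite A" and cA: "card A = (f + 2) choose 2"
    and nc: "\<not> (\<exists>C\<in>curves_le f. A \<subseteq> C)" and fe: "f \<le> e"
  shows "int (card (veronese e ` A \<inter> F)) \<le> 1 + fdim F"
proof -
  obtain a B where B: "F = (\<lambda>v. a + v) ` G.span B" "finite B" "card B < card (Ik e)"
    "fdim F = int (card B)" "{x - y |x y. x \<in> F \<and> y \<in> F} \<subseteq> G.span (delta ` Ik e)"
    using flat_setup[OF e1 fl FR Fne] by blast
  define T where "T = {pt\<in>A. veronese e pt \<in> F}"
  have fT: "finite T" using fA unfolding T_def by simp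
  have "card T \<le> G.dim {x - y |x y. x \<in> F \<and> y \<in> F} + 1"
  proof (rule aff_ind_card[OF fT _ _ B(5)])
    show "finite (delta ` Ik e)" by simp
    show "veronese e ` T \<subseteq> F" unfolding T_def by blast
    fix l assume "(\<Sum>t\<in>T. l t) = 0" "(\<Sum>t\<in>T. scaleG (l t) (veronese e t)) = 0"
    then show "\<forall>t\<in>T. l t = 0"
      using aff_A[OF fe fA _ nc, of T l] cA card_Dk[of f] unfolding T_def by auto
  qed
  moreover have "G.dim {x - y |x y. x \<in> F \<and> y \<in> F} = card B"
    using B(4) flat_nonempty[OF fl] flat_Fl[OF fl] unfolding fdim_def scaleF_eq by simp
  ultimately show ?thesis using B(4) card_ver_inter[OF e1, of A F] unfolding T_def by simp
qed

lemma part2: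
  assumes e1: "e \<ge> 1" and fl: "is_flat F" and FR: "F \<subseteq> RN e" and Fne: "F \<noteq> RN e"
    and fA: "finite A" and cA: "card A = (f + 2) choose 2"
    and nc: "\<not> (\<exists>C\<in>curves_le f. A \<subseteq> C)" and ef: "e < f"
  shows "int (card (veronese e ` A \<inter> F))
          \<le> int ((f + 2) choose 2) - int ((f - e + 2) choose 2) - int ((e + 2) choose 2) + 2 + fdim F"
proof -
  obtain a B where B: "F = (\<lambda>v. a + v) ` G.span B" "finite B" "card B < card (Ik e)"
    "fdim F = int (card B)" "{x - y |x y. x \<in> F \<and> y \<in> F} \<subseteq> G.span (delta ` Ik e)"
    using flat_setup[OF e1 fl FR Fne] by blast
  have Ane: "A \<noteq> {}" using cA by auto
  define m where "m = card (Ik e)"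
  define k where "k = card B"
  define r where "r = m - 1 - k"
  define A' where "A' = A - {pt. veronese e pt \<in> F}"
  have fA': "finite A'" using fA unfolding A'_def by simp
  obtain T where T: "T \<subseteq> A'" "card T = min r (card A')" "finite T"
    using obtain_subset_with_card_n[of "min r (card A')" A'] by auto
  define B2 where "B2 = B \<union> (\<lambda>t. veronese e t - a) ` T"
  have fB2: "finite B2" unfolding B2_def using B(2) T(3) by simp
  have "card B2 \<le> card B + card ((\<lambda>t. veronese e t - a) ` T)"
    unfolding B2_def by (rule card_Un_le)
  also have "\<dots> \<le> k + card T" unfolding k_def using card_image_le[OF T(3)] by simp
  also have "\<dots> < m" using T(2) B(3) unfolding r_def m_def k_def by simp
  finally have cB2: "card B2 < card (Ik e)" unfolding m_def .
  have base: "card (Dk (f - e)) \<le> card (A - {pt. veronese e pt \<in> (\<lambda>v. a + v) ` G.span B2})"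
    using base_case[OF _ fA Ane nc fB2 cB2] ef by simp
  have sub: "A - {pt. veronese e pt \<in> (\<lambda>v. a + v) ` G.span B2} \<subseteq> A' - T"
  proof
    fix pt assume pt: "pt \<in> A - {pt. veronese e pt \<in> (\<lambda>v. a + v) ` G.span B2}"
    have "G.span B \<subseteq> G.span B2" unfolding B2_def by (rule G.span_mono) blast
    hence "veronese e pt \<notin> F" using pt unfolding B(1) by blast
    moreover have "pt \<notin> T"
    proof
      assume "pt \<in> T"
      hence "veronese e pt - a \<in> G.span B2" unfolding B2_def by (intro G.span_base) blast
      hence "veronese e pt \<in> (\<lambda>v. a + v) ` G.span B2" by (rule rev_image_eqI) simp
      with pt show False by blast
    qed
    ultimately show "pt \<in> A' - T" using pt unfolding A'_def by blast
  qed
  have "card (A' - T) = card A' - card T" using T(1,3) by (simp add: card_Diff_subset)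
  hence c1: "card (Dk (f - e)) \<le> card A' - card T"
  proof -
    have "finite (A' - T)" using fA' by simp
    from card_mono[OF this sub] base \<open>card (A' - T) = card A' - card T\<close> show ?thesis by linarith
  qed
  have "(0,0) \<in> Dk (f - e)" by (simp add: Dk_def)
  hence "card (Dk (f - e)) \<ge> 1" using card_gt_0_iff[of "Dk (f - e)"] by fastforce
  hence "card T < card A'" using c1 by linarith
  hence Tr: "card T = r" using T(2) by linarith
  have km: "k < m" using B(3) unfolding k_def m_def .
  have split: "card {pt\<in>A. veronese e pt \<in> F} + card A' = card A"
  proof -
    have "A = {pt\<in>A. veronese e pt \<in> F} \<union> A'" "{pt\<in>A. veronese e pt \<in> F} \<inter> A' = {}"
      unfolding A'_def by blast+
    moreover have "finite {pt\<in>A. veronese e pt \<in> F}" using fA by simp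
    ultimately show ?thesis using card_Un_disjoint[of "{pt\<in>A. veronese e pt \<in> F}" A'] fA' by simp
  qed
  have mI: "m + 1 = (e + 2) choose 2" unfolding m_def by (rule card_Ik)
  have "int (card (veronese e ` A \<inter> F)) = int (card A) - int (card A')"
    using card_ver_inter[OF e1, of A F] split by simp
  also have "\<dots> \<le> int (card A) - int (card (Dk (f - e))) - int r"
    using c1 Tr T(1) fA' card_mono[OF fA' T(1)] by linarith
  also have "\<dots> = int ((f + 2) choose 2) - int ((f - e + 2) choose 2) - int ((e + 2) choose 2) + 2 + fdim F"
    using cA card_Dk[of "f - e"] mI km B(4) unfolding r_def k_def by simp
  finally show ?thesis .
qed

lemma part3:
  assumes e1: "e \<ge> 1" and fl: "is_flat F" and FR: "F \<subseteq> RN e" and Fne: "F \<noteq> RN e"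
    and fA: "finite A" and cA: "card A = (f + 2) choose 2"
    and nc: "\<not> (\<exists>C\<in>curves_le f. A \<subseteq> C)" and ef: "e < f" and dk: "d \<ge> f - e"
  shows "fdim (veronese d ` (A - {a. veronese e a \<in> F})) \<ge> int ((f - e + 2) choose 2) - 1"
proof -
  obtain a B where B: "F = (\<lambda>v. a + v) ` G.span B" "finite B" "card B < card (Ik e)"
    "fdim F = int (card B)" "{x - y |x y. x \<in> F \<and> y \<in> F} \<subseteq> G.span (delta ` Ik e)"
    using flat_setup[OF e1 fl FR Fne] by blast
  have Ane: "A \<noteq> {}" using cA by auto
  define k where "k = f - e"
  define A' where "A' = A - {a. veronese e a \<in> F}"
  have fA': "finite A'" using fA unfolding A'_def by simp
  obtain g where g: "supp e g" "\<exists>q\<in>Dk e. g q \<noteq> 0"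
     "\<forall>pt. veronese e pt \<in> (\<lambda>v. a + v) ` G.span B \<longrightarrow> pev e g pt = 0"
    using annih[OF B(2) B(3), of a] by blast
  have noh: False if h: "\<exists>q\<in>Dk k. h q \<noteq> 0" "\<forall>pt\<in>A'. pev k h pt = 0" for h
  proof -
    have "\<exists>C\<in>curves_le f. A \<subseteq> C"
    proof (rule prod_lemma[OF Ane g(2) h(1)])
      show "e + k \<le> f" using ef unfolding k_def by simp
      show "\<forall>a\<in>A. pev e g a = 0 \<or> pev k h a = 0"
        using g(3) h(2) unfolding A'_def B(1) by blast
    qed
    with nc show False by blast
  qed
  have A'ne: "A' \<noteq> {}"
  proof
    assume "A' = {}"
    show False
      by (rule noh[of "delta (0,0)"]) (auto simp: \<open>A' = {}\<close> delta_def Dk_def)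
  qed
  define \<mu> where "\<mu> pt = (\<lambda>q. if q \<in> Dk k then mon pt q else 0)" for pt
  obtain Bm where Bm: "Bm \<subseteq> \<mu> ` A'" "G.independent Bm" "\<mu> ` A' \<subseteq> G.span Bm"
    using G.maximal_independent_subset[of "\<mu> ` A'"] by blast
  have fBm: "finite Bm" using Bm(1) fA' finite_subset by blast
  have cBm: "card (Dk k) \<le> card Bm"
  proof (rule ccontr)
    assume "\<not> card (Dk k) \<le> card Bm"
    hence lt: "card Bm < card (Dk k)" by simp
    obtain c where c: "\<exists>q\<in>Dk k. c q \<noteq> 0" "\<forall>b\<in>Bm. (\<Sum>q\<in>Dk k. c q * b q) = 0"
      using dual[OF finite_Dk fBm lt, of "\<lambda>q b. b q"] by blast
    have "\<forall>pt\<in>A'. pev k c pt = 0"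
    proof
      fix pt assume "pt \<in> A'"
      hence "\<mu> pt \<in> G.span Bm" using Bm(3) by blast
      from linfun_span[OF c(2) this] have "(\<Sum>q\<in>Dk k. c q * \<mu> pt q) = 0" .
      moreover have "(\<Sum>q\<in>Dk k. c q * \<mu> pt q) = pev k c pt"
        unfolding pev_def \<mu>_def by (rule sum.cong) simp_all
      ultimately show "pev k c pt = 0" by simp
    qed
    with noh[OF c(1)] show False by blast
  qed
  define iv where "iv = inv_into A' \<mu>"
  define T where "T = iv ` Bm"
  have injiv: "inj_on iv Bm" unfolding iv_def by (rule inj_on_inv_into[OF Bm(1)])
  have muiv: "\<mu> (iv b) = b" if "b \<in> Bm" for b
    unfolding iv_def using that Bm(1) by (intro f_inv_into_f) blast
  have TA': "T \<subseteq> A'"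
  proof
    fix t assume "t \<in> T"
    then obtain b where "b \<in> Bm" "t = iv b" unfolding T_def by blast
    then show "t \<in> A'" unfolding iv_def using Bm(1) inv_into_into[of b \<mu> A'] by blast
  qed
  have fT: "finite T" unfolding T_def using fBm by simp
  have cT: "card T = card Bm" unfolding T_def using card_image[OF injiv] .
  define S where "S = veronese d ` A'"
  have Sne: "S \<noteq> {}" unfolding S_def using A'ne by simp
  have SR: "S \<subseteq> RN d" unfolding S_def using veronese_RN by blast
  have "card T \<le> G.dim {x - y |x y. x \<in> Fl S \<and> y \<in> Fl S} + 1"
  proof (rule aff_ind_card[OF fT])
    show "veronese d ` T \<subseteq> Fl S" using Fl_props[OF Sne SR] TA' unfolding S_def by blast
    show "{x - y |x y. x \<in> Fl S \<and> y \<in> Fl S} \<subseteq> G.span (delta ` Ik d)"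
      by (rule diffs_RN) (rule Fl_props(2)[OF Sne SR])
    show "finite (delta ` Ik d)" by simp
    fix l assume s1: "(\<Sum>t\<in>T. l t) = 0" and s2: "(\<Sum>t\<in>T. scaleG (l t) (veronese d t)) = 0"
    have s3: "(\<Sum>t\<in>T. scaleG (l t) (\<mu> t)) = 0"
    proof
      fix q
      show "(\<Sum>t\<in>T. scaleG (l t) (\<mu> t)) q = 0 q"
      proof (cases "q \<in> Dk k")
        case False then show ?thesis by (simp add: sum_fun_apply \<mu>_def)
      next
        case True
        show ?thesis
        proof (cases "q = (0,0)")
          case True0: True
          then show ?thesis using s1 True by (simp add: sum_fun_apply \<mu>_def mon_def)
        next
          case False
          hence qI: "q \<in> Ik d" using True dk unfolding k_def by (auto simp: Dk_def Ik_def)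
          have "(\<Sum>t\<in>T. scaleG (l t) (\<mu> t)) q = (\<Sum>t\<in>T. scaleG (l t) (veronese d t)) q"
            using True by (simp add: sum_fun_apply \<mu>_def veronese_in[OF qI])
          then show ?thesis using s2 by simp
        qed
      qed
    qed
    have s4: "(\<Sum>b\<in>Bm. scaleG (l (iv b)) b) = 0"
    proof -
      have "(\<Sum>b\<in>Bm. scaleG (l (iv b)) b) = (\<Sum>b\<in>Bm. scaleG (l (iv b)) (\<mu> (iv b)))"
        by (rule sum.cong) (simp_all add: muiv)
      also have "\<dots> = (\<Sum>t\<in>T. scaleG (l t) (\<mu> t))"
        unfolding T_def using sum.reindex[OF injiv, of "\<lambda>t. scaleG (l t) (\<mu> t)"] by simp
      finally show ?thesis using s3 by simp
    qed
    show "\<forall>t\<in>T. l t = 0"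
    proof
      fix t assume "t \<in> T"
      then obtain b where b: "b \<in> Bm" "t = iv b" unfolding T_def by blast
      have ie: "\<forall>t u v. finite t \<longrightarrow> t \<subseteq> Bm \<longrightarrow> (\<Sum>v\<in>t. scaleG (u v) v) = 0 \<longrightarrow> v \<in> t \<longrightarrow> u v = 0"
        using Bm(2) unfolding G.independent_explicit_module .
      have "l (iv b) = 0"
        using ie[rule_format, of Bm "\<lambda>b. l (iv b)" b] fBm s4 b(1) by simp
      then show "l t = 0" using b by simp
    qed
  qed
  moreover have "fdim S = int (G.dim {x - y |x y. x \<in> Fl S \<and> y \<in> Fl S})"
    using Sne unfolding fdim_def scaleF_eq by simp
  moreover have "card (Dk k) = (f - e + 2) choose 2" unfolding k_def by (rule card_Dk)
  ultimately show ?thesis using cT cBm unfolding S_def A'_def by simp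
qed

theorem lemma15:
  fixes e f :: nat and F :: "vec set" and A :: "(real \<times> real) set"
  assumes "e \<ge> 1"
    and "is_flat F" and "F \<subseteq> RN e" and "F \<noteq> RN e"
    and "finite A" and "card A = (f + 2) choose 2"
    and "\<not> (\<exists>C\<in>curves_le f. A \<subseteq> C)"
  shows "(e \<ge> f \<longrightarrow> int (card (veronese e ` A \<inter> F)) \<le> 1 + fdim F)
    \<and> (e < f \<longrightarrow> int (card (veronese e ` A \<inter> F))
          \<le> int ((f + 2) choose 2) - int ((f - e + 2) choose 2) - int ((e + 2) choose 2) + 2 + fdim F)
    \<and> (e < f \<longrightarrow> (\<forall>d::nat. d \<ge> f - e \<longrightarrow>
          fdim (veronese d ` (A - {a. veronese e a \<in> F})) \<ge> int ((f - e + 2) choose 2) - 1))"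
  using part1[OF assms(1-7)] part2[OF assms(1-7)] part3[OF assms(1-7)] by auto

end
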